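(* Let $A$ be an $m$-dimensional permutation array of size $n_1\times\cdots\times n_m$, index set $\Lambda=[n_1]\times\cdots\times[n_m]$, and order $n$. If $|\mathcal{H}_A|-|H_\Lambda|<n-1$, then there is an $n_1\times\cdots\times n_m$ window in the periodic extension of $A$ which has a repeated difference vector.
   Context: For $n\in\mathbb{N}$, $[n]=\{1,\dots,n\}$; $m\ge2$, all $n_i\ge2$. A binary array $A:\Lambda\to\{0,1\}$ is an $m$-dimensional permutation array if there exist $k$ with $1\le k<m$ and a bijection $\varphi:[n_1]\times\cdots\times[n_k]\to[n_{k+1}]\times\cdots\times[n_m]$ such that $A(a_1,\dots,a_m)=1$ iff $\varphi(a_1,\dots,a_k)=(a_{k+1},\dots,a_m)$; points with value 1 are dots; the order is $n=n_1\cdots n_k=n_{k+1}\cdots n_m$. The periodic extension $\mathbb{A}:\mathbb{Z}^m\to\{0,1\}$ is $\mathbb{A}(a_1,\dots,a_m)=A(a_1',\dots,a_m')$ with $a_i'\in[n_i]$, $a_i'\equiv a_i\pmod{n_i}$; an $n_1\times\cdots\times n_m$ window is the restriction of $\mathbb{A}$ to a box $\prod_i\{k_i,\dots,k_i+n_i-1\}$, $k_i\in\mathbb{Z}$. The difference vector from dot $(a_i)$ to a distinct dot $(w_i)$ is $\langle w_i-a_i\rangle_i\in\mathbb{Z}^m$, the toroidal vector is $\langle (w_i-a_i)\bmod n_i\rangle_i$; a window has a repeated difference vector if two distinct ordered pairs of distinct dots in it have the same difference vector. $\mathcal{H}_A$ is the multiset (counted with multiplicity over ordered pairs of distinct dots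 of $A$) of toroidal vectors $\langle h_1,\dots,h_m\rangle$ of $A$ with $h_i=n_i/2$ for some $i$. With $Z_1=\mathbb{Z}_{n_1}\times\cdots\times\mathbb{Z}_{n_k}$, $Z_2=\mathbb{Z}_{n_{k+1}}\times\cdots\times\mathbb{Z}_{n_m}$, $T_\Lambda=(Z_1\times Z_2)\setminus((Z_1\times\{0\})\cup(\{0\}\times Z_2))$ and $H_\Lambda=\{\langle h_1,\dots,h_m\rangle\in T_\Lambda: h_i=n_i/2\text{ for some }i\in[m]\}$ (a set). *)

theory Defs
  imports Main "HOL-Library.Multiset"
begin

text \<open>Points of Z^m are represented as int lists of length m; the size vector
(n_1,...,n_m) is a nat list ns with m = length ns.  Coordinate i of the paper
is list position i-1.\<close>

definition box :: "nat list \<Rightarrow> int list set" where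
  "box ns = {a. length a = length ns \<and> (\<forall>i<length ns. 1 \<le> a!i \<and> a!i \<le> int (ns!i))}"

definition is_perm_array_wrt ::
  "nat list \<Rightarrow> nat \<Rightarrow> (int list \<Rightarrow> int list) \<Rightarrow> (int list \<Rightarrow> nat) \<Rightarrow> bool" where
  "is_perm_array_wrt ns k \<phi> A \<longleftrightarrow>
     1 \<le> k \<and> k < length ns \<and>
     bij_betw \<phi> (box (take k ns)) (box (drop k ns)) \<and>
     (\<forall>a\<in>box ns. A a \<in> {0,1} \<and> (A a = 1 \<longleftrightarrow> \<phi> (take k a) = drop k a))"

definition dots :: "nat list \<Rightarrow> (int list \<Rightarrow> nat) \<Rightarrow> int list set" where
  "dots ns A = {a \<in> box ns. A a = 1}"

definition per_ext :: "nat list \<Rightarrow> (int list \<Rightarrow> nat) \<Rightarrow> int list \<Rightarrow> nat" where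
  "per_ext ns A a = A (map (\<lambda>(x, n). (x - 1) mod int n + 1) (zip a ns))"

definition window_box :: "nat list \<Rightarrow> int list \<Rightarrow> int list set" where
  "window_box ns c = {a. length a = length ns \<and>
      (\<forall>i<length ns. c!i \<le> a!i \<and> a!i \<le> c!i + int (ns!i) - 1)}"

definition diff_vec :: "int list \<Rightarrow> int list \<Rightarrow> int list" where
  "diff_vec a w = map (\<lambda>(x, y). y - x) (zip a w)"

definition toroidal_vec :: "nat list \<Rightarrow> int list \<Rightarrow> int list \<Rightarrow> int list" where
  "toroidal_vec ns a w = map (\<lambda>((x, y), n). (y - x) mod int n) (zip (zip a w) ns)"

definition window_has_repeated_diff ::
  "nat list \<Rightarrow> (int list \<Rightarrow> nat) \<Rightarrow> int list \<Rightarrow> bool" where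
  "window_has_repeated_diff ns A c \<longleftrightarrow>
     (let D = {a \<in> window_box ns c. per_ext ns A a = 1} in
      \<exists>p q p' q'. p \<in> D \<and> q \<in> D \<and> p' \<in> D \<and> q' \<in> D \<and> p \<noteq> q \<and> p' \<noteq> q' \<and>
        (p, q) \<noteq> (p', q') \<and> diff_vec p q = diff_vec p' q')"

definition has_half_coord :: "nat list \<Rightarrow> int list \<Rightarrow> bool" where
  "has_half_coord ns h \<longleftrightarrow> (\<exists>i<length ns. 2 * h!i = int (ns!i))"

definition H_A :: "nat list \<Rightarrow> (int list \<Rightarrow> nat) \<Rightarrow> int list multiset" where
  "H_A ns A = image_mset (\<lambda>(a, w). toroidal_vec ns a w)
     (mset_set {(a, w). a \<in> dots ns A \<and> w \<in> dots ns A \<and> a \<noteq> w \<and>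
                        has_half_coord ns (toroidal_vec ns a w)})"

text \<open>Z_1 x Z_2 as vectors with 0 \<le> h_i < n_i; T_Lambda and H_Lambda for split k.\<close>
definition Zvecs :: "nat list \<Rightarrow> int list set" where
  "Zvecs ns = {h. length h = length ns \<and> (\<forall>i<length ns. 0 \<le> h!i \<and> h!i < int (ns!i))}"

definition T_Lambda :: "nat list \<Rightarrow> nat \<Rightarrow> int list set" where
  "T_Lambda ns k = {h \<in> Zvecs ns. \<not> (\<forall>i. k \<le> i \<and> i < length ns \<longrightarrow> h!i = 0)
                                 \<and> \<not> (\<forall>i<k. h!i = 0)}"

definition H_Lambda :: "nat list \<Rightarrow> nat \<Rightarrow> int list set" where
  "H_Lambda ns k = {h \<in> T_Lambda ns k. has_half_coord ns h}"

end

theory Submission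
  imports Defs
begin


lemma coord1:
  fixes N u v u' v' :: int
  assumes N: "N > 0" and eq: "(v-u) mod N = (v'-u') mod N" and small: "2*((v-u) mod N) < N"
  shows "\<exists>c. (v-c) mod N - (u-c) mod N = (v'-c) mod N - (u'-c) mod N"
proof -
  define d where "d = (v-u) mod N"
  have F: "(y-c) mod N - (x-c) mod N = d" if "(y-x) mod N = d" "(x-c) mod N + d < N" for x y c
  proof -
    have "(y-c) mod N = ((x-c) mod N + (y-x) mod N) mod N"
      by (simp add: mod_add_eq)
    also have "\<dots> = (x-c) mod N + d" using that N
      by (simp add: mod_pos_pos_trivial d_def)
    finally show ?thesis by simp
  qed
  have d0: "0 \<le> d" "d < N" using N by (auto simp: d_def)
  define e where "e = (u'-u) mod N"
  have e0: "0 \<le> e" "e < N" using N by (auto simp: e_def)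
  show ?thesis
  proof (cases "e + d < N")
    case True
    have "(v-u) mod N - (u-u) mod N = d" using F[where x=u and y=v and c=u] d0 by (simp add: d_def)
    moreover have "(v'-u) mod N - (u'-u) mod N = d" using F[where x=u' and y=v' and c=u] True eq
      by (simp add: d_def e_def)
    ultimately show ?thesis by metis
  next
    case False
    have "e \<noteq> 0" using False d0 by auto
    hence "(u-u') mod N = N - e" unfolding e_def
      using zmod_zminus1_eq_if[of "u'-u" N] by simp
    hence a: "(v-u') mod N - (u-u') mod N = d" using F[where x=u and y=v and c=u'] False small d0 e0
      by (simp add: d_def)
    have b: "(v'-u') mod N - (u'-u') mod N = d" using F[where x=u' and y=v' and c=u'] d0 eq by (simp add: d_def)
    show ?thesis using a b by metis
  qed
qed

lemma coord2:
  fixes N u v u' v' :: int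
  assumes N: "N > 0" and eq: "(v-u) mod N = (v'-u') mod N" and nh: "2*((v-u) mod N) \<noteq> N"
  shows "\<exists>c. (v-c) mod N - (u-c) mod N = (v'-c) mod N - (u'-c) mod N"
proof (cases "2*((v-u) mod N) < N")
  case True thus ?thesis using coord1[OF N eq] by blast
next
  case False
  hence big: "2*((v-u) mod N) > N" using nh by linarith
  hence nz: "(v-u) mod N \<noteq> 0" "(v'-u') mod N \<noteq> 0" using N eq by auto
  have s1: "(u-v) mod N = N - (v-u) mod N"
    using zmod_zminus1_eq_if[of "v-u" N] nz by simp
  have s2: "(u'-v') mod N = N - (v'-u') mod N"
    using zmod_zminus1_eq_if[of "v'-u'" N] nz by simp
  have eq2: "(u-v) mod N = (u'-v') mod N" using s1 s2 eq by simp
  have sm: "2*((u-v) mod N) < N" using s1 big by simp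
  obtain c where "(u-c) mod N - (v-c) mod N = (u'-c) mod N - (v'-c) mod N"
    using coord1[OF N eq2 sm] by blast
  hence "(v-c) mod N - (u-c) mod N = (v'-c) mod N - (u'-c) mod N" by linarith
  thus ?thesis by blast
qed

lemma red_lift:
  fixes c x N :: int
  assumes "N > 0" "1 \<le> x" "x \<le> N"
  shows "(c + (x-c) mod N - 1) mod N + 1 = x"
proof -
  have "c + (x-c) mod N - 1 = (x-c) mod N + (c-1)" by simp
  hence "(c + (x-c) mod N - 1) mod N = ((x-c) + (c-1)) mod N"
    by (metis mod_add_left_eq)
  also have "\<dots> = x - 1" using assms by (simp add: mod_pos_pos_trivial)
  finally show ?thesis by simp
qed

lemma mod_zero_eq:
  fixes x y N :: int
  assumes "1 \<le> x" "x \<le> N" "1 \<le> y" "y \<le> N" "(y-x) mod N = 0"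
  shows "x = y"
proof (rule ccontr)
  assume "x \<noteq> y"
  hence "y - x \<noteq> 0" by simp
  moreover have "N dvd (y-x)" using assms(5) by (simp add: dvd_eq_mod_eq_0)
  ultimately have "\<bar>N\<bar> \<le> \<bar>y-x\<bar>" using dvd_imp_le_int by blast
  thus False using assms by linarith
qed



lemma box_la: "box ns = {a. list_all2 (\<lambda>x n. 1 \<le> x \<and> x \<le> int n) a ns}"
  by (auto simp: box_def list_all2_conv_all_nth)

lemma Z_la: "Zvecs ns = {a. list_all2 (\<lambda>x n. 0 \<le> x \<and> x < int n) a ns}"
  by (auto simp: Zvecs_def list_all2_conv_all_nth)

lemma la_card:
  assumes "\<And>n. finite {x. R x n}"
  shows "finite {a. list_all2 R a ns} \<and> card {a. list_all2 R a ns} = prod_list (map (\<lambda>n. card {x. R x n}) ns)"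
proof (induction ns)
  case Nil
  have "{a. list_all2 R a []} = {[]}" by auto
  thus ?case by simp
next
  case (Cons n ns)
  have e: "{a. list_all2 R a (n#ns)} = (\<lambda>(x,xs). x#xs) ` ({x. R x n} \<times> {a. list_all2 R a ns})"
    by (auto simp: list_all2_Cons2)
  have inj: "inj_on (\<lambda>(x,xs). x#xs) ({x. R x n} \<times> {a. list_all2 R a ns})"
    by (auto simp: inj_on_def)
  show ?case unfolding e using Cons assms[of n]
    by (simp add: card_image[OF inj] card_cartesian_product)
qed

lemma box_card: "finite (box ns) \<and> card (box ns) = prod_list ns"
proof -
  have "\<And>n::nat. {x::int. 1 \<le> x \<and> x \<le> int n} = {1..int n}" by auto
  hence c: "\<And>n::nat. card {x::int. 1 \<le> x \<and> x \<le> int n} = n" by simp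
  have "finite {x::int. 1 \<le> x \<and> x \<le> int n}" for n by simp
  from la_card[of "\<lambda>x n. 1 \<le> x \<and> x \<le> int n", OF this, of ns] show ?thesis
    unfolding box_la c by simp
qed

lemma Z_card: "finite (Zvecs ns) \<and> card (Zvecs ns) = prod_list ns"
proof -
  have "\<And>n::nat. {x::int. 0 \<le> x \<and> x < int n} = {0..<int n}" by auto
  hence c: "\<And>n::nat. card {x::int. 0 \<le> x \<and> x < int n} = n" by simp
  have "finite {x::int. 0 \<le> x \<and> x < int n}" for n by simp
  from la_card[of "\<lambda>x n. 0 \<le> x \<and> x < int n", OF this, of ns] show ?thesis
    unfolding Z_la c by simp
qed

lemma box_split:
  "a \<in> box ns \<longleftrightarrow> take k a \<in> box (take k ns) \<and> drop k a \<in> box (drop k ns) \<and> length a = length ns"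
proof
  assume "a \<in> box ns" thus "take k a \<in> box (take k ns) \<and> drop k a \<in> box (drop k ns) \<and> length a = length ns"
    unfolding box_la by (simp add: list_all2_dropI list_all2_takeI list_all2_lengthD)
next
  assume h: "take k a \<in> box (take k ns) \<and> drop k a \<in> box (drop k ns) \<and> length a = length ns"
  hence "list_all2 (\<lambda>x n. 1 \<le> x \<and> x \<le> int n) (take k a @ drop k a) (take k ns @ drop k ns)"
    unfolding box_la by (intro list_all2_appendI) auto
  thus "a \<in> box ns" unfolding box_la by simp
qed

lemma Z_split:
  "a \<in> Zvecs ns \<Longrightarrow> take k a \<in> Zvecs (take k ns) \<and> drop k a \<in> Zvecs (drop k ns)"
  unfolding Z_la
  by (simp add: list_all2_dropI list_all2_takeI)

lemma prod_pos: "\<forall>x\<in>set xs. (x::nat) > 0 \<Longrightarrow> prod_list xs > 0"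
  by (induction xs) auto



definition lift :: "nat list \<Rightarrow> int list \<Rightarrow> int list \<Rightarrow> int list" where
  "lift ns c x = map (\<lambda>i. c!i + (x!i - c!i) mod int (ns!i)) [0..<length ns]"

lemma red_lift_list:
  assumes pos: "\<forall>i<length ns. ns!i \<ge> 2" and x: "x \<in> box ns"
  shows "map (\<lambda>(x, n). (x - 1) mod int n + 1) (zip (lift ns c x) ns) = x"
proof (rule nth_equalityI)
  show "length (map (\<lambda>(x, n). (x - 1) mod int n + 1) (zip (lift ns c x) ns)) = length x"
    using x by (simp add: lift_def box_def)
next
  fix i assume "i < length (map (\<lambda>(x, n). (x - 1) mod int n + 1) (zip (lift ns c x) ns))"
  hence i: "i < length ns" by (simp add: lift_def)
  have "int (ns!i) > 0" using pos i by force
  moreover have "1 \<le> x!i" "x!i \<le> int (ns!i)" using x i by (auto simp: box_def)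
  ultimately show "map (\<lambda>(x, n). (x - 1) mod int n + 1) (zip (lift ns c x) ns) ! i = x ! i"
    using i red_lift[of "int (ns!i)" "x!i" "c!i"] by (simp add: lift_def)
qed

lemma per_ext_lift:
  assumes "\<forall>i<length ns. ns!i \<ge> 2" "x \<in> box ns"
  shows "per_ext ns A (lift ns c x) = A x"
  unfolding per_ext_def using red_lift_list[OF assms, of c] by (rule arg_cong)

lemma lift_inj:
  assumes "\<forall>i<length ns. ns!i \<ge> 2" "x \<in> box ns" "y \<in> box ns" "lift ns c x = lift ns c y"
  shows "x = y"
  by (metis red_lift_list[OF assms(1,2), of c] red_lift_list[OF assms(1,3), of c] assms(4))

lemma lift_window:
  assumes "\<forall>i<length ns. ns!i \<ge> 2"
  shows "lift ns c x \<in> window_box ns c"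
proof -
  have "c!i \<le> c!i + (x!i - c!i) mod int (ns!i) \<and> c!i + (x!i - c!i) mod int (ns!i) \<le> c!i + int (ns!i) - 1"
    if "i < length ns" for i
  proof -
    have "int (ns!i) > 0" using assms that by force
    thus ?thesis using pos_mod_bound[of "int (ns!i)" "x!i - c!i"] pos_mod_sign[of "int (ns!i)" "x!i - c!i"]
      by linarith
  qed
  thus ?thesis by (simp add: window_box_def lift_def)
qed

lemma diff_lift:
  "length (diff_vec (lift ns c a) (lift ns c w)) = length ns"
  "i < length ns \<Longrightarrow> diff_vec (lift ns c a) (lift ns c w) ! i =
     (w!i - c!i) mod int (ns!i) - (a!i - c!i) mod int (ns!i)"
  by (simp_all add: diff_vec_def lift_def)

lemma tv_nth:
  assumes "length a = length ns" "length w = length ns" "i < length ns"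
  shows "toroidal_vec ns a w ! i = (w!i - a!i) mod int (ns!i)"
  using assms by (simp add: toroidal_vec_def)

lemma tv_len:
  assumes "length a = length ns" "length w = length ns"
  shows "length (toroidal_vec ns a w) = length ns"
  using assms by (simp add: toroidal_vec_def)

lemma window_lemma:
  assumes pos: "\<forall>i<length ns. ns!i \<ge> 2"
    and ab: "a \<in> box ns" "w \<in> box ns" "a' \<in> box ns" "w' \<in> box ns"
    and A1: "A a = 1" "A w = 1" "A a' = 1" "A w' = 1"
    and ne: "a \<noteq> w" "a' \<noteq> w'" "(a,w) \<noteq> (a',w')"
    and tv: "toroidal_vec ns a w = toroidal_vec ns a' w'"
    and nh: "\<not> has_half_coord ns (toroidal_vec ns a w)"
  shows "\<exists>c. length c = length ns \<and> window_has_repeated_diff ns A c"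
proof -
  have len: "length a = length ns" "length w = length ns" "length a' = length ns" "length w' = length ns"
    using ab by (auto simp: box_def)
  have "\<forall>i<length ns. \<exists>ci. (w!i - ci) mod int (ns!i) - (a!i - ci) mod int (ns!i)
        = (w'!i - ci) mod int (ns!i) - (a'!i - ci) mod int (ns!i)"
  proof (intro allI impI)
    fix i assume i: "i < length ns"
    have N: "int (ns!i) > 0" using pos i by force
    have e: "(w!i - a!i) mod int (ns!i) = (w'!i - a'!i) mod int (ns!i)"
      using tv_nth[OF len(1,2) i] tv_nth[OF len(3,4) i] tv by simp
    have h: "2 * ((w!i - a!i) mod int (ns!i)) \<noteq> int (ns!i)"
      using nh i tv_nth[OF len(1,2) i] by (auto simp: has_half_coord_def tv_len[OF len(1,2)])
    show "\<exists>ci. (w!i - ci) mod int (ns!i) - (a!i - ci) mod int (ns!i)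
        = (w'!i - ci) mod int (ns!i) - (a'!i - ci) mod int (ns!i)"
      using coord2[OF N e h] by blast
  qed
  then have "\<forall>i. \<exists>ci. i<length ns \<longrightarrow> (w!i - ci) mod int (ns!i) - (a!i - ci) mod int (ns!i)
        = (w'!i - ci) mod int (ns!i) - (a'!i - ci) mod int (ns!i)" by blast
  then obtain cf where cf0: "\<forall>i. i<length ns \<longrightarrow> (w!i - cf i) mod int (ns!i) - (a!i - cf i) mod int (ns!i)
        = (w'!i - cf i) mod int (ns!i) - (a'!i - cf i) mod int (ns!i)"
    by (rule choice[THEN exE]) blast
  hence cf: "\<And>i. i<length ns \<Longrightarrow> (w!i - cf i) mod int (ns!i) - (a!i - cf i) mod int (ns!i)
        = (w'!i - cf i) mod int (ns!i) - (a'!i - cf i) mod int (ns!i)" by blast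
  define c where "c = map cf [0..<length ns]"
  have lc: "length c = length ns" by (simp add: c_def)
  define p where "p = lift ns c a"
  define q where "q = lift ns c w"
  define p' where "p' = lift ns c a'"
  define q' where "q' = lift ns c w'"
  let ?D = "{x \<in> window_box ns c. per_ext ns A x = 1}"
  have inD: "lift ns c x \<in> ?D" if "x \<in> box ns" "A x = 1" for x
    using lift_window[OF pos] per_ext_lift[OF pos that(1)] that(2) by simp
  have D: "p \<in> ?D" "q \<in> ?D" "p' \<in> ?D" "q' \<in> ?D"
    unfolding p_def q_def p'_def q'_def using inD ab A1 by auto
  have n1: "p \<noteq> q" unfolding p_def q_def using lift_inj[OF pos ab(1,2)] ne(1) by blast
  have n2: "p' \<noteq> q'" unfolding p'_def q'_def using lift_inj[OF pos ab(3,4)] ne(2) by blast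
  have n3: "(p,q) \<noteq> (p',q')" unfolding p_def q_def p'_def q'_def
    using lift_inj[OF pos ab(1,3)] lift_inj[OF pos ab(2,4)] ne(3) by blast
  have dv: "diff_vec p q = diff_vec p' q'"
    unfolding p_def q_def p'_def q'_def
    by (rule nth_equalityI) (use cf in \<open>simp_all add: diff_lift c_def\<close>)
  have "window_has_repeated_diff ns A c"
    unfolding window_has_repeated_diff_def Let_def
    using D n1 n2 n3 dv by blast
  thus ?thesis using lc by blast
qed



lemma neq_nth:
  assumes "xs \<noteq> ys" "length xs = length ys"
  shows "\<exists>i<length xs. xs!i \<noteq> ys!i"
proof (rule ccontr)
  assume "\<not> (\<exists>i<length xs. xs!i \<noteq> ys!i)"
  hence "xs = ys" using assms(2) by (intro nth_equalityI) auto
  thus False using assms(1) by simp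
qed

theorem mainTheorem6:
  fixes ns :: "nat list" and k :: nat and \<phi> :: "int list \<Rightarrow> int list"
    and A :: "int list \<Rightarrow> nat" and n :: nat
  assumes "length ns \<ge> 2"
    and "\<forall>i<length ns. ns!i \<ge> 2"
    and "is_perm_array_wrt ns k \<phi> A"
    and "n = prod_list (take k ns)"
    and "int (size (H_A ns A)) - int (card (H_Lambda ns k)) < int n - 1"
  shows "\<exists>c. length c = length ns \<and> window_has_repeated_diff ns A c"
proof (rule ccontr)
  assume nw: "\<not> ?thesis"
  note pos = assms(2)
  define m where "m = length ns"
  have k1: "1 \<le> k" and km: "k < m" and bij: "bij_betw \<phi> (box (take k ns)) (box (drop k ns))"
    and Adef: "\<And>a. a \<in> box ns \<Longrightarrow> (A a = 1 \<longleftrightarrow> \<phi> (take k a) = drop k a)"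
    using assms(3) by (auto simp: is_perm_array_wrt_def m_def)
  have injphi: "inj_on \<phi> (box (take k ns))" using bij_betw_imp_inj_on[OF bij] .
  define D where "D = dots ns A"
  have fin1: "finite (box (take k ns))" and cb1: "card (box (take k ns)) = n"
    using box_card[of "take k ns"] assms(4) by auto
  have cb2: "card (box (drop k ns)) = n" using bij_betw_same_card[OF bij] cb1 by simp
  have lenbox: "length x = length ns" if "x \<in> box ns" for x ns using that by (simp add: box_def)
  have Deq: "D = (\<lambda>x. x @ \<phi> x) ` box (take k ns)"
  proof
    show "D \<subseteq> (\<lambda>x. x @ \<phi> x) ` box (take k ns)"
    proof
      fix a assume "a \<in> D"
      hence a: "a \<in> box ns" "A a = 1" by (auto simp: D_def dots_def)
      hence "a = take k a @ \<phi> (take k a)" using Adef by simp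
      moreover have "take k a \<in> box (take k ns)" using a box_split by blast
      ultimately show "a \<in> (\<lambda>x. x @ \<phi> x) ` box (take k ns)" by blast
    qed
  next
    show "(\<lambda>x. x @ \<phi> x) ` box (take k ns) \<subseteq> D"
    proof
      fix a assume "a \<in> (\<lambda>x. x @ \<phi> x) ` box (take k ns)"
      then obtain x where x: "x \<in> box (take k ns)" and ax: "a = x @ \<phi> x" by blast
      have y: "\<phi> x \<in> box (drop k ns)" using bij_betw_apply[OF bij x] .
      have lx: "length x = k" using lenbox[OF x] km m_def by simp
      have ly: "length (\<phi> x) = m - k" using lenbox[OF y] m_def by simp
      have tk: "take k a = x" "drop k a = \<phi> x" using ax lx by auto
      have ab: "a \<in> box ns" using box_split[of a ns k] tk x y lx ly ax km m_def by simp
      have "A a = 1" using Adef[OF ab] tk by simp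
      thus "a \<in> D" using ab by (simp add: D_def dots_def)
    qed
  qed
  have injD: "inj_on (\<lambda>x. x @ \<phi> x) (box (take k ns))"
  proof (rule inj_onI)
    fix x y assume x: "x \<in> box (take k ns)" and y: "y \<in> box (take k ns)" and e: "x @ \<phi> x = y @ \<phi> y"
    have "length x = length y" using lenbox[OF x] lenbox[OF y] by simp
    thus "x = y" using e by simp
  qed
  have finD: "finite D" and cD: "card D = n" using Deq fin1 cb1 card_image[OF injD] by auto
  have Dbox: "D \<subseteq> box ns" by (auto simp: D_def dots_def)
  have DA: "a \<in> D \<Longrightarrow> A a = 1" for a by (auto simp: D_def dots_def)
  define P where "P = {(a, w). a \<in> D \<and> w \<in> D \<and> a \<noteq> w}"
  have Peq: "P = D \<times> D - (\<lambda>x. (x,x)) ` D" by (auto simp: P_def)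
  have finP: "finite P" using Peq finD by simp
  have cP: "card P = n * n - n"
  proof -
    have "card ((\<lambda>x. (x,x)) ` D) = n" using cD by (simp add: card_image inj_on_def)
    moreover have sub: "(\<lambda>x. (x,x)) ` D \<subseteq> D \<times> D" by auto
    ultimately show ?thesis unfolding Peq
      using card_Diff_subset[OF finite_imageI[OF finD] sub] cD by (simp add: card_cartesian_product)
  qed
  define tv where "tv = (\<lambda>(a,w). toroidal_vec ns a w)"
  define PH where "PH = {(a, w). a \<in> dots ns A \<and> w \<in> dots ns A \<and> a \<noteq> w \<and>
                        has_half_coord ns (toroidal_vec ns a w)}"
  have sH: "size (H_A ns A) = card PH" by (simp add: H_A_def PH_def)
  have PHP: "PH \<subseteq> P" by (auto simp: PH_def P_def D_def)
  have PmPH: "P - PH = {(a,w). (a,w) \<in> P \<and> \<not> has_half_coord ns (tv (a,w))}"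
    by (auto simp: PH_def P_def D_def tv_def)
  have inT: "tv (a,w) \<in> T_Lambda ns k" if aw: "(a,w) \<in> P" for a w
  proof -
    have a: "a \<in> box ns" "A a = 1" and w: "w \<in> box ns" "A w = 1" and ne: "a \<noteq> w"
      using aw Dbox DA by (auto simp: P_def)
    have la: "length a = m" "length w = m" using a w lenbox m_def by auto
    have ta: "take k a \<in> box (take k ns)" "take k w \<in> box (take k ns)" using a w box_split by blast+
    have pa: "\<phi> (take k a) = drop k a" "\<phi> (take k w) = drop k w" using Adef a w by auto
    have tne: "take k a \<noteq> take k w"
    proof
      assume "take k a = take k w"
      hence "drop k a = drop k w" using pa by metis
      hence "take k a @ drop k a = take k w @ drop k w" using \<open>take k a = take k w\<close> by simp
      thus False using ne by simp
    qed
    have dne: "drop k a \<noteq> drop k w"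
    proof
      assume "drop k a = drop k w"
      hence "\<phi> (take k a) = \<phi> (take k w)" using pa by simp
      thus "False" using tne inj_onD[OF injphi _ ta] by blast
    qed
    have nz: "(w!i - a!i) mod int (ns!i) \<noteq> 0" if i: "i < m" "a!i \<noteq> w!i" for i
    proof
      assume h: "(w!i - a!i) mod int (ns!i) = 0"
      have "1 \<le> a!i" "a!i \<le> int (ns!i)" "1 \<le> w!i" "w!i \<le> int (ns!i)"
        using a(1) w(1) i by (auto simp: box_def m_def)
      thus False using mod_zero_eq[OF _ _ _ _ h] i(2) by blast
    qed
    obtain i where i: "i < k" "a!i \<noteq> w!i" using neq_nth[OF tne] la km by auto
    obtain j where j: "j < m - k" "a!(k+j) \<noteq> w!(k+j)" using neq_nth[OF dne] la km by auto
    have tvn: "tv (a,w) ! i = (w!i - a!i) mod int (ns!i)" if "i < m" for i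
      using tv_nth[of a ns w i] la that m_def by (simp add: tv_def)
    have ltv: "length (tv (a,w)) = m" using tv_len[of a ns w] la m_def by (simp add: tv_def)
    have Z: "tv (a,w) \<in> Zvecs ns"
    proof -
      have "0 \<le> tv (a,w) ! i \<and> tv (a,w) ! i < int (ns!i)" if "i < m" for i
      proof -
        have "int (ns!i) > 0" using pos that m_def by force
        thus ?thesis using tvn[OF that] by simp
      qed
      thus ?thesis using ltv by (simp add: Zvecs_def m_def)
    qed
    have c1: "\<not> (\<forall>i. k \<le> i \<and> i < length ns \<longrightarrow> tv (a,w) ! i = 0)"
    proof -
      have kj: "k + j < m" using j by simp
      have "tv (a,w) ! (k+j) \<noteq> 0" using nz[OF kj j(2)] tvn[OF kj] by simp
      thus ?thesis using kj m_def by (metis le_add1)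
    qed
    have c2: "\<not> (\<forall>i<k. tv (a,w) ! i = 0)"
      using i nz[of i] tvn[of i] km by auto
    show ?thesis using Z c1 c2 by (simp add: T_Lambda_def)
  qed
  have inj: "inj_on tv (P - PH)"
  proof (rule inj_onI)
    fix x y assume x: "x \<in> P - PH" and y: "y \<in> P - PH" and e: "tv x = tv y"
    obtain a w where xaw: "x = (a,w)" by (cases x)
    obtain a' w' where yaw: "y = (a',w')" by (cases y)
    show "x = y"
    proof (rule ccontr)
      assume "x \<noteq> y"
      have h: "a \<in> box ns" "w \<in> box ns" "a' \<in> box ns" "w' \<in> box ns"
        "A a = 1" "A w = 1" "A a' = 1" "A w' = 1" "a \<noteq> w" "a' \<noteq> w'"
        using x y xaw yaw Dbox DA by (auto simp: P_def)
      have nh: "\<not> has_half_coord ns (toroidal_vec ns a w)" using x xaw PmPH by (auto simp: tv_def)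
      have "toroidal_vec ns a w = toroidal_vec ns a' w'" using e xaw yaw by (simp add: tv_def)
      from window_lemma[OF pos h(1-4) h(5-8) h(9,10) _ this nh] \<open>x \<noteq> y\<close> xaw yaw nw
      show False by blast
    qed
  qed
  define T where "T = T_Lambda ns k"
  define HL where "HL = H_Lambda ns k"
  have finZ: "finite (Zvecs ns)" using Z_card by blast
  have finT: "finite T" using finZ by (auto simp: T_def T_Lambda_def intro: finite_subset)
  have HT: "HL \<subseteq> T" by (auto simp: HL_def H_Lambda_def T_def)
  have img: "tv ` (P - PH) \<subseteq> T - HL"
    using inT PmPH by (auto simp: T_def HL_def H_Lambda_def)
  have q_le: "card (P - PH) \<le> card T - card HL"
  proof -
    have "card (P - PH) \<le> card (T - HL)" using card_inj_on_le[OF inj img] finT by simp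
    also have "\<dots> = card T - card HL" using card_Diff_subset[OF finite_subset[OF HT finT] HT] .
    finally show ?thesis .
  qed
  have h_le: "card HL \<le> card T" using card_mono[OF finT HT] .
  have PPH: "card P = card PH + card (P - PH)"
    using card_Diff_subset[OF finite_subset[OF PHP finP] PHP] card_mono[OF finP PHP] by simp
  have n1: "n \<ge> 1"
  proof -
    have "\<forall>x\<in>set (take k ns). x > 0"
      using pos by (force simp: in_set_conv_nth)
    hence "prod_list (take k ns) > 0" by (rule prod_pos)
    thus ?thesis using assms(4) by simp
  qed
  have tT: "card T \<le> (n-1)*(n-1)"
  proof -
    define Z1 where "Z1 = Zvecs (take k ns) - {replicate k 0}"
    define Z2 where "Z2 = Zvecs (drop k ns) - {replicate (m-k) 0}"
    have r1: "replicate k 0 \<in> Zvecs (take k ns)"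
    proof -
      have "0 < ns!i" if "i < k" for i using pos km m_def that by (metis less_trans less_le_trans zero_less_numeral)
      thus ?thesis using km m_def by (auto simp: Zvecs_def)
    qed
    have r2: "replicate (m-k) 0 \<in> Zvecs (drop k ns)"
    proof -
      have "0 < ns!(k+i)" if "i < m - k" for i using pos km m_def that
        by (metis less_diff_conv add.commute less_le_trans zero_less_numeral)
      thus ?thesis using km m_def by (auto simp: Zvecs_def)
    qed
    have cz1: "card (Zvecs (take k ns)) = n" using Z_card assms(4) by simp
    have cz2: "card (Zvecs (drop k ns)) = n"
    proof -
      have "card (Zvecs (drop k ns)) = prod_list (drop k ns)" using Z_card by blast
      also have "\<dots> = card (box (drop k ns))" using box_card by simp
      finally show ?thesis using cb2 by simp
    qed
    have fz1: "finite (Zvecs (take k ns))" "finite (Zvecs (drop k ns))" using Z_card by blast+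
    have cZ1: "card Z1 = n - 1" unfolding Z1_def using r1 cz1 fz1 by simp
    have cZ2: "card Z2 = n - 1" unfolding Z2_def using r2 cz2 fz1 by simp
    define g where "g = (\<lambda>h::int list. (take k h, drop k h))"
    have ginj: "inj_on g T"
    proof (rule inj_onI)
      fix x y assume "g x = g y"
      hence "take k x = take k y" "drop k x = drop k y" by (auto simp: g_def)
      hence "take k x @ drop k x = take k y @ drop k y" by simp
      thus "x = y" by simp
    qed
    have gimg: "g ` T \<subseteq> Z1 \<times> Z2"
    proof
      fix y assume "y \<in> g ` T"
      then obtain h where h: "h \<in> T" and y: "y = g h" by blast
      have hz: "h \<in> Zvecs ns" and hk: "\<not> (\<forall>i. k \<le> i \<and> i < m \<longrightarrow> h!i = 0)"
        and hk2: "\<not> (\<forall>i<k. h!i = 0)"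
        using h by (auto simp: T_def T_Lambda_def m_def)
      have lh: "length h = m" using hz by (simp add: Zvecs_def m_def)
      obtain i where i: "i < k" "h!i \<noteq> 0" using hk2 by blast
      obtain j where j: "k \<le> j" "j < m" "h!j \<noteq> 0" using hk by blast
      have "take k h \<noteq> replicate k 0"
      proof
        assume "take k h = replicate k 0"
        hence "take k h ! i = 0" using i by simp
        thus False using i by simp
      qed
      moreover have "drop k h \<noteq> replicate (m-k) 0"
      proof
        assume "drop k h = replicate (m-k) 0"
        hence "drop k h ! (j-k) = 0" using j by simp
        thus False using j lh by simp
      qed
      ultimately show "y \<in> Z1 \<times> Z2" using Z_split[OF hz] y by (simp add: g_def Z1_def Z2_def)
    qed
    have "card T = card (g ` T)" using card_image[OF ginj] by simp
    also have "\<dots> \<le> card (Z1 \<times> Z2)"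
      by (rule card_mono[OF _ gimg]) (use fz1 in \<open>simp add: Z1_def Z2_def\<close>)
    also have "\<dots> = (n-1)*(n-1)" using cZ1 cZ2 by (simp add: card_cartesian_product)
    finally show ?thesis .
  qed
  have i1: "int (card P) = int n * int n - int n" using cP n1 by (simp add: of_nat_diff)
  have "int ((n-1)*(n-1)) = (int n - 1) * (int n - 1)" using n1 by (simp add: of_nat_diff)
  hence i2: "int (card T) \<le> (int n - 1) * (int n - 1)" using tT by (metis of_nat_le_iff)
  have i3: "int (card (P - PH)) \<le> int (card T) - int (card HL)" using q_le h_le by linarith
  have i4: "int (card P) = int (card PH) + int (card (P - PH))" using PPH by simp
  have "(int n - 1) * (int n - 1) = int n * int n - 2 * int n + 1" by (simp add: algebra_simps)
  hence "int (card PH) - int (card HL) \<ge> int n - 1" using i1 i2 i3 i4 by linarith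
  thus False using assms(5) sH by (simp add: HL_def)
qed


end
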